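(* Let $X$ be a separated metric compact Hausdorff space. Consider the assignments $\mathrm{Quot}(X)\to\mathrm{Subm}(X)$, $(f\colon X\twoheadrightarrow Y)\mapsto\kappa_f$, and $\mathrm{Subm}(X)\to\mathrm{Quot}(X)$, $\gamma\mapsto(p_\gamma\colon X\twoheadrightarrow X/{\sim_\gamma})$. These form a dual equivalence between the preordered class $\mathrm{Quot}(X)$ and the poset $\mathrm{Subm}(X)$: both are order-reversing, for all $f\in\mathrm{Quot}(X)$ and $\gamma\in\mathrm{Subm}(X)$ one has $\kappa_f\le\gamma$ iff $p_\gamma\le f$, $\kappa_{p_\gamma}=\gamma$, and $p_{\kappa_f}$ is isomorphic to $f$ (i.e. $p_{\kappa_f}\le f\le p_{\kappa_f}$). Consequently the poset $\tilde{\mathbf{Q}}(X)$ of quotient objects of $X$ is dually isomorphic to $\mathrm{Subm}(X)$.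
   Context: A metric on a set $X$ is a map $d\colon X\times X\to[0,\infty]$ with $d(x,x)=0$ and $d(x,z)\le d(x,y)+d(y,z)$ (not necessarily symmetric, $\infty$ allowed); separated means $d(x,y)=0=d(y,x)$ implies $x=y$. The upper topology on $[0,\infty]$ has as nonempty proper open sets the sets $]u,\infty]$. A separated metric compact Hausdorff space is a compact Hausdorff space with a separated metric continuous $X\times X\to[0,\infty]$ for the upper topology; $\mathbf{MetCH_{sep}}$ is the category of these with continuous non-expansive maps. $\mathrm{Quot}(X)$ is the class of surjective morphisms of $\mathbf{MetCH_{sep}}$ with domain $X$, preordered by $f\le g$ iff there is a morphism $h$ with $h\circ f=g$; $\tilde{\mathbf{Q}}(X)$ is the poset obtained by identifying $f,g$ with $f\le g\le f$. For $f\colon X\to Y$, the kernel metric is $\kappa_f(x_1,x_2)=d_Y(f(x_1),f(x_2))$. $\mathrm{Subm}(X)$ is the set of continuous submetrics on $X$: (not necessarily separated) metrics $\gamma$ on $X$ continuous $X\times X\to[0,\infty]$ for the upper topology with $\gamma\le d$ pointwise, ordered pointwise. For $\gamma\in\mathrm{Subm}(X)$, $x\sim_\gamma y$ iff $\gamma(x,y)=\gamma(y,x)=0$; $X/{\sim_\gamma}$ carries the quotient topology and the metric $([x],[y])\mapsto\gamma(x,y)$, and $p_\gamma\colon X\to X/{\sim_\gamma}$ is the projection, a surjective morphism of $\mathbf{MetCH_{sep}}$. *)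

theory Defs
  imports "HOL-Analysis.Analysis" "HOL-Library.Extended_Nonnegative_Real"
begin

text \<open>Distances take values in [0,\<infinity>], modelled by ennreal.
  The upper topology on [0,\<infinity>]: open sets are UNIV and the sets ]u,\<infinity>]
  (u = \<infinity> gives the empty set).\<close>

definition upper_topology :: "ennreal topology" where
  "upper_topology = topology (\<lambda>U. U = UNIV \<or> (\<exists>u. U = {u<..}))"

text \<open>A (not necessarily symmetric, possibly infinite) metric on the carrier S.\<close>
definition is_metric :: "'a set \<Rightarrow> ('a \<Rightarrow> 'a \<Rightarrow> ennreal) \<Rightarrow> bool" where
  "is_metric S d \<longleftrightarrow> (\<forall>x\<in>S. d x x = 0) \<and>
     (\<forall>x\<in>S. \<forall>y\<in>S. \<forall>z\<in>S. d x z \<le> d x y + d y z)"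

definition separated_metric :: "'a set \<Rightarrow> ('a \<Rightarrow> 'a \<Rightarrow> ennreal) \<Rightarrow> bool" where
  "separated_metric S d \<longleftrightarrow> (\<forall>x\<in>S. \<forall>y\<in>S. d x y = 0 \<and> d y x = 0 \<longrightarrow> x = y)"

definition upper_continuous_metric :: "'a topology \<Rightarrow> ('a \<Rightarrow> 'a \<Rightarrow> ennreal) \<Rightarrow> bool" where
  "upper_continuous_metric T d \<longleftrightarrow>
     continuous_map (prod_topology T T) upper_topology (\<lambda>(x, y). d x y)"

definition metCH_sep :: "'a topology \<Rightarrow> ('a \<Rightarrow> 'a \<Rightarrow> ennreal) \<Rightarrow> bool" where
  "metCH_sep T d \<longleftrightarrow> compact_space T \<and> Hausdorff_space T \<and>
     is_metric (topspace T) d \<and> separated_metric (topspace T) d \<and>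
     upper_continuous_metric T d"

definition metCH_mor ::
  "'a topology \<Rightarrow> ('a \<Rightarrow> 'a \<Rightarrow> ennreal) \<Rightarrow> 'b topology \<Rightarrow> ('b \<Rightarrow> 'b \<Rightarrow> ennreal) \<Rightarrow> ('a \<Rightarrow> 'b) \<Rightarrow> bool"
  where
  "metCH_mor T d S e f \<longleftrightarrow> metCH_sep T d \<and> metCH_sep S e \<and> continuous_map T S f \<and>
     (\<forall>x\<in>topspace T. \<forall>y\<in>topspace T. e (f x) (f y) \<le> d x y)"

text \<open>An element of Quot(X): a surjective morphism f : X \<rightarrow> (S, e), recorded
  together with its codomain.\<close>
definition in_Quot ::
  "'a topology \<Rightarrow> ('a \<Rightarrow> 'a \<Rightarrow> ennreal) \<Rightarrow> 'b topology \<times> ('b \<Rightarrow> 'b \<Rightarrow> ennreal) \<times> ('a \<Rightarrow> 'b) \<Rightarrow> bool"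
  where
  "in_Quot T d q \<longleftrightarrow> (case q of (S, e, f) \<Rightarrow>
     metCH_mor T d S e f \<and> f ` topspace T = topspace S)"

definition quot_le ::
  "'a topology \<Rightarrow> 'b topology \<times> ('b \<Rightarrow> 'b \<Rightarrow> ennreal) \<times> ('a \<Rightarrow> 'b)
     \<Rightarrow> 'c topology \<times> ('c \<Rightarrow> 'c \<Rightarrow> ennreal) \<times> ('a \<Rightarrow> 'c) \<Rightarrow> bool" where
  "quot_le T q r \<longleftrightarrow> (case q of (S, e, f) \<Rightarrow> case r of (S', e', g) \<Rightarrow>
     (\<exists>h. metCH_mor S e S' e' h \<and> (\<forall>x\<in>topspace T. h (f x) = g x)))"

definition kernel_metric ::
  "'b topology \<times> ('b \<Rightarrow> 'b \<Rightarrow> ennreal) \<times> ('a \<Rightarrow> 'b) \<Rightarrow> 'a \<Rightarrow> 'a \<Rightarrow> ennreal" where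
  "kernel_metric q = (case q of (S, e, f) \<Rightarrow> (\<lambda>x y. e (f x) (f y)))"

definition in_Subm :: "'a topology \<Rightarrow> ('a \<Rightarrow> 'a \<Rightarrow> ennreal) \<Rightarrow> ('a \<Rightarrow> 'a \<Rightarrow> ennreal) \<Rightarrow> bool"
  where
  "in_Subm T d \<gamma> \<longleftrightarrow> is_metric (topspace T) \<gamma> \<and> upper_continuous_metric T \<gamma> \<and>
     (\<forall>x\<in>topspace T. \<forall>y\<in>topspace T. \<gamma> x y \<le> d x y)"

definition metric_le :: "'a topology \<Rightarrow> ('a \<Rightarrow> 'a \<Rightarrow> ennreal) \<Rightarrow> ('a \<Rightarrow> 'a \<Rightarrow> ennreal) \<Rightarrow> bool"
  where
  "metric_le T \<gamma> \<delta> \<longleftrightarrow> (\<forall>x\<in>topspace T. \<forall>y\<in>topspace T. \<gamma> x y \<le> \<delta> x y)"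

definition quotient_topology :: "'a topology \<Rightarrow> ('a \<Rightarrow> 'b) \<Rightarrow> 'b topology" where
  "quotient_topology X q =
     topology (\<lambda>U. U \<subseteq> q ` topspace X \<and> openin X {x \<in> topspace X. q x \<in> U})"

definition sim_rel :: "('a \<Rightarrow> 'a \<Rightarrow> ennreal) \<Rightarrow> 'a \<Rightarrow> 'a \<Rightarrow> bool" where
  "sim_rel \<gamma> x y \<longleftrightarrow> \<gamma> x y = 0 \<and> \<gamma> y x = 0"

definition proj_class :: "'a topology \<Rightarrow> ('a \<Rightarrow> 'a \<Rightarrow> ennreal) \<Rightarrow> 'a \<Rightarrow> 'a set" where
  "proj_class T \<gamma> x = {y \<in> topspace T. sim_rel \<gamma> x y}"

text \<open>The quotient X/\<sim>_gamma with quotient topology, metric ([x],[y]) \<mapsto> \<gamma>(x,y),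
  and projection p_gamma.\<close>
definition p_quot ::
  "'a topology \<Rightarrow> ('a \<Rightarrow> 'a \<Rightarrow> ennreal) \<Rightarrow> 'a set topology \<times> ('a set \<Rightarrow> 'a set \<Rightarrow> ennreal) \<times> ('a \<Rightarrow> 'a set)"
  where
  "p_quot T \<gamma> =
     (quotient_topology T (proj_class T \<gamma>),
      (\<lambda>A B. \<gamma> (SOME x. x \<in> A) (SOME y. y \<in> B)),
      proj_class T \<gamma>)"

end

theory Submission
  imports Defs
begin

lemma istopology_upper: "istopology (\<lambda>U::ennreal set. U = UNIV \<or> (\<exists>u. U = {u<..}))"
  unfolding istopology_def
proof (intro conjI allI impI)
  fix S T :: "ennreal set"
  assume "S = UNIV \<or> (\<exists>u. S = {u<..})" "T = UNIV \<or> (\<exists>u. T = {u<..})"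
  then show "S \<inter> T = UNIV \<or> (\<exists>u. S \<inter> T = {u<..})"
  proof (elim disjE exE)
    fix u v assume "S = {u<..}" "T = {v<..}"
    then have "S \<inter> T = {max u v<..}" by auto
    then show ?thesis by blast
  qed auto
next
  fix K :: "ennreal set set"
  assume H: "\<forall>K\<in>K. K = UNIV \<or> (\<exists>u. K = {u<..})"
  show "\<Union>K = UNIV \<or> (\<exists>u. \<Union>K = {u<..})"
  proof (cases "UNIV \<in> K")
    case True then show ?thesis by auto
  next
    case False
    then have H': "\<forall>A\<in>K. \<exists>u. A = {u<..}" using H by metis
    have "\<Union>K = {Inf {u. {u<..} \<in> K}<..}"
    proof (intro set_eqI iffI)
      fix x assume "x \<in> \<Union>K"
      then obtain A where A: "A \<in> K" "x \<in> A" by auto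
      then obtain u where "A = {u<..}" using H' by blast
      then show "x \<in> {Inf {u. {u<..} \<in> K}<..}" using A
        by (auto simp: Inf_less_iff)
    next
      fix x assume "x \<in> {Inf {u. {u<..} \<in> K}<..}"
      then show "x \<in> \<Union>K" by (auto simp: Inf_less_iff)
    qed
    then show ?thesis by blast
  qed
qed

lemma openin_upper: "openin upper_topology U \<longleftrightarrow> U = UNIV \<or> (\<exists>u. U = {u<..})"
  unfolding upper_topology_def using istopology_upper by simp

lemma topspace_upper [simp]: "topspace upper_topology = UNIV"
  by (metis openin_subset openin_upper top.extremum_uniqueI)

lemma continuous_upper:
  "continuous_map X upper_topology g \<longleftrightarrow> (\<forall>u. openin X {x\<in>topspace X. u < g x})"
proof
  assume c: "continuous_map X upper_topology g"
  show "\<forall>u. openin X {x\<in>topspace X. u < g x}"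
  proof
    fix u :: ennreal
    have "openin upper_topology {u<..}" unfolding openin_upper by blast
    then have "openin X {x\<in>topspace X. g x \<in> {u<..}}"
      using openin_continuous_map_preimage[OF c] by blast
    then show "openin X {x\<in>topspace X. u < g x}" by simp
  qed
next
  assume H: "\<forall>u. openin X {x\<in>topspace X. u < g x}"
  have "openin X {x \<in> topspace X. g x \<in> U}" if U: "openin upper_topology U" for U
  proof -
    from U have "U = UNIV \<or> (\<exists>u. U = {u<..})" unfolding openin_upper .
    then show ?thesis
    proof
      assume "U = UNIV" then show ?thesis by simp
    next
      assume "\<exists>u. U = {u<..}"
      then obtain u where "U = {u<..}" by blast
      then show ?thesis using H by simp
    qed
  qed
  then show "continuous_map X upper_topology g"
    unfolding continuous_map_def by simp
qed

lemma istopology_quotient: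
  "istopology (\<lambda>U. U \<subseteq> q ` topspace X \<and> openin X {x \<in> topspace X. q x \<in> U})"
proof -
  have 1: "S \<inter> T \<subseteq> q ` topspace X \<and> openin X {x \<in> topspace X. q x \<in> S \<inter> T}"
    if "S \<subseteq> q ` topspace X \<and> openin X {x \<in> topspace X. q x \<in> S}"
     "T \<subseteq> q ` topspace X \<and> openin X {x \<in> topspace X. q x \<in> T}" for S T
  proof -
    have "{x \<in> topspace X. q x \<in> S \<inter> T} = {x \<in> topspace X. q x \<in> S} \<inter> {x \<in> topspace X. q x \<in> T}"
      by auto
    then show ?thesis using that by auto
  qed
  have 2: "\<Union>K \<subseteq> q ` topspace X \<and> openin X {x \<in> topspace X. q x \<in> \<Union>K}"
    if H: "\<forall>K\<in>K. K \<subseteq> q ` topspace X \<and> openin X {x \<in> topspace X. q x \<in> K}" for K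
  proof -
    have "{x \<in> topspace X. q x \<in> \<Union>K} = \<Union> ((\<lambda>A. {x \<in> topspace X. q x \<in> A}) ` K)" by auto
    moreover have "openin X (\<Union> ((\<lambda>A. {x \<in> topspace X. q x \<in> A}) ` K))"
      using H by auto
    ultimately show ?thesis using H by auto
  qed
  show ?thesis unfolding istopology_def using 1 2 by blast
qed

lemma openin_quotient_topology:
  "openin (quotient_topology X q) U \<longleftrightarrow> U \<subseteq> q ` topspace X \<and> openin X {x \<in> topspace X. q x \<in> U}"
  unfolding quotient_topology_def topology_inverse'[OF istopology_quotient] by simp

lemma topspace_quotient_topology [simp]: "topspace (quotient_topology X q) = q ` topspace X"
proof -
  have "openin (quotient_topology X q) (q ` topspace X)"
  proof -
    have "{x \<in> topspace X. q x \<in> q ` topspace X} = topspace X" by auto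
    then show ?thesis unfolding openin_quotient_topology by simp
  qed
  then show ?thesis
    by (metis openin_quotient_topology openin_subset subset_antisym openin_topspace)
qed

lemma quotient_map_quotient_topology: "quotient_map X (quotient_topology X q) q"
  unfolding quotient_map_def openin_quotient_topology by auto


definition qd :: "('a \<Rightarrow> 'a \<Rightarrow> ennreal) \<Rightarrow> 'a set \<Rightarrow> 'a set \<Rightarrow> ennreal" where
  "qd \<gamma> = (\<lambda>A B. \<gamma> (SOME x. x \<in> A) (SOME y. y \<in> B))"

lemma p_quot_eq: "p_quot T \<gamma> = (quotient_topology T (proj_class T \<gamma>), qd \<gamma>, proj_class T \<gamma>)"
  unfolding p_quot_def qd_def by simp

context
  fixes T :: "'a topology" and \<gamma> :: "'a \<Rightarrow> 'a \<Rightarrow> ennreal"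
  assumes M: "is_metric (topspace T) \<gamma>"
begin

lemma sim_refl: "x \<in> topspace T \<Longrightarrow> sim_rel \<gamma> x x"
  using M unfolding is_metric_def sim_rel_def by auto

lemma sim_sym: "sim_rel \<gamma> x y \<Longrightarrow> sim_rel \<gamma> y x"
  unfolding sim_rel_def by auto

lemma tri: "x \<in> topspace T \<Longrightarrow> y \<in> topspace T \<Longrightarrow> z \<in> topspace T \<Longrightarrow> \<gamma> x z \<le> \<gamma> x y + \<gamma> y z"
  using M unfolding is_metric_def by auto

lemma sim_trans: "x \<in> topspace T \<Longrightarrow> y \<in> topspace T \<Longrightarrow> z \<in> topspace T \<Longrightarrow>
   sim_rel \<gamma> x y \<Longrightarrow> sim_rel \<gamma> y z \<Longrightarrow> sim_rel \<gamma> x z"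
  unfolding sim_rel_def using tri by (metis add.right_neutral le_zero_eq)

lemma gamma_le_inv:
  assumes "x \<in> topspace T" "x' \<in> topspace T" "y \<in> topspace T" "y' \<in> topspace T"
    "sim_rel \<gamma> x x'" "sim_rel \<gamma> y y'"
  shows "\<gamma> x' y' \<le> \<gamma> x y"
proof -
  have "\<gamma> x' y' \<le> \<gamma> x' x + \<gamma> x y'" using tri assms by blast
  also have "\<dots> \<le> \<gamma> x' x + (\<gamma> x y + \<gamma> y y')" using tri assms by (meson add_left_mono)
  finally show ?thesis using assms unfolding sim_rel_def by simp
qed

lemma gamma_inv:
  assumes "x \<in> topspace T" "x' \<in> topspace T" "y \<in> topspace T" "y' \<in> topspace T"
    "sim_rel \<gamma> x x'" "sim_rel \<gamma> y y'"
  shows "\<gamma> x' y' = \<gamma> x y"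
  using gamma_le_inv[OF assms] gamma_le_inv[of x' x y' y] assms sim_sym
  by (meson antisym)

lemma mem_class: "x \<in> topspace T \<Longrightarrow> x \<in> proj_class T \<gamma> x"
  unfolding proj_class_def using sim_refl by auto

lemma class_sub: "proj_class T \<gamma> x \<subseteq> topspace T"
  unfolding proj_class_def by auto

lemma class_eq:
  assumes "x \<in> topspace T" "y \<in> topspace T"
  shows "proj_class T \<gamma> x = proj_class T \<gamma> y \<longleftrightarrow> sim_rel \<gamma> x y"
proof
  assume "proj_class T \<gamma> x = proj_class T \<gamma> y"
  then show "sim_rel \<gamma> x y" using mem_class[OF assms(2)] unfolding proj_class_def by auto
next
  assume "sim_rel \<gamma> x y"
  then show "proj_class T \<gamma> x = proj_class T \<gamma> y"
    unfolding proj_class_def using assms sim_trans sim_sym by blast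
qed

lemma rep_class:
  assumes "x \<in> topspace T"
  shows "(SOME a. a \<in> proj_class T \<gamma> x) \<in> topspace T \<and>
         sim_rel \<gamma> x (SOME a. a \<in> proj_class T \<gamma> x) \<and>
         proj_class T \<gamma> (SOME a. a \<in> proj_class T \<gamma> x) = proj_class T \<gamma> x"
proof -
  have "(SOME a. a \<in> proj_class T \<gamma> x) \<in> proj_class T \<gamma> x"
    using mem_class[OF assms] by (meson someI)
  then have "(SOME a. a \<in> proj_class T \<gamma> x) \<in> topspace T \<and> sim_rel \<gamma> x (SOME a. a \<in> proj_class T \<gamma> x)"
    unfolding proj_class_def by auto
  then show ?thesis using class_eq assms by metis
qed

lemma qd_eq:
  assumes "x \<in> topspace T" "y \<in> topspace T"
  shows "qd \<gamma> (proj_class T \<gamma> x) (proj_class T \<gamma> y) = \<gamma> x y"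
  unfolding qd_def using rep_class[OF assms(1)] rep_class[OF assms(2)] gamma_inv assms by blast

end


context
  fixes T :: "'a topology" and \<gamma> :: "'a \<Rightarrow> 'a \<Rightarrow> ennreal"
  assumes M: "is_metric (topspace T) \<gamma>"
    and UC: "upper_continuous_metric T \<gamma>"
    and CS: "compact_space T" and HS: "Hausdorff_space T"
begin

lemma closed_le:
  "closedin (prod_topology T T) {z \<in> topspace T \<times> topspace T. \<gamma> (fst z) (snd z) \<le> u}"
proof -
  have "openin (prod_topology T T) {z \<in> topspace (prod_topology T T). u < (\<lambda>(x, y). \<gamma> x y) z}"
    using UC unfolding upper_continuous_metric_def continuous_upper by blast
  then have "closedin (prod_topology T T) (topspace (prod_topology T T) -
        {z \<in> topspace (prod_topology T T). u < (\<lambda>(x, y). \<gamma> x y) z})"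
    by blast
  moreover have "topspace (prod_topology T T) -
        {z \<in> topspace (prod_topology T T). u < (\<lambda>(x, y). \<gamma> x y) z}
      = {z \<in> topspace T \<times> topspace T. \<gamma> (fst z) (snd z) \<le> u}"
    by (auto simp: not_less)
  ultimately show ?thesis by simp
qed

lemma closed_R: "closedin (prod_topology T T) {z \<in> topspace T \<times> topspace T. sim_rel \<gamma> (fst z) (snd z)}"
proof -
  have c1: "closedin (prod_topology T T) {z \<in> topspace T \<times> topspace T. \<gamma> (fst z) (snd z) \<le> 0}"
    by (rule closed_le)
  have sw: "continuous_map (prod_topology T T) (prod_topology T T) (\<lambda>z. (snd z, fst z))"
    by (intro continuous_map_pairedI continuous_map_snd continuous_map_fst)
  have c2: "closedin (prod_topology T T) {z \<in> topspace (prod_topology T T). (snd z, fst z) \<in>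
      {z \<in> topspace T \<times> topspace T. \<gamma> (fst z) (snd z) \<le> 0}}"
    by (rule closedin_continuous_map_preimage[OF sw c1])
  have "{z \<in> topspace T \<times> topspace T. sim_rel \<gamma> (fst z) (snd z)} =
     {z \<in> topspace T \<times> topspace T. \<gamma> (fst z) (snd z) \<le> 0} \<inter>
     {z \<in> topspace (prod_topology T T). (snd z, fst z) \<in>
      {z \<in> topspace T \<times> topspace T. \<gamma> (fst z) (snd z) \<le> 0}}"
    unfolding sim_rel_def by auto
  then show ?thesis using c1 c2 by auto
qed

lemma sat_closed:
  assumes "closedin T C"
  shows "closedin T {y \<in> topspace T. \<exists>c\<in>C. sim_rel \<gamma> c y}"
proof -
  let ?R = "{z \<in> topspace T \<times> topspace T. sim_rel \<gamma> (fst z) (snd z)}"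
  have CX: "closedin (prod_topology T T) (C \<times> topspace T)"
    using assms by (simp add: closedin_prod_Times_iff)
  have "closedin (prod_topology T T) (?R \<inter> (C \<times> topspace T))"
    using closed_R CX by auto
  moreover have "compact_space (prod_topology T T)"
    using CS compact_space_prod_topology by blast
  ultimately have "compactin (prod_topology T T) (?R \<inter> (C \<times> topspace T))"
    using closedin_compact_space by blast
  then have "compactin T (snd ` (?R \<inter> (C \<times> topspace T)))"
    using image_compactin continuous_map_snd by blast
  then have "closedin T (snd ` (?R \<inter> (C \<times> topspace T)))"
    using compactin_imp_closedin HS by blast
  moreover have "snd ` (?R \<inter> (C \<times> topspace T)) = {y \<in> topspace T. \<exists>c\<in>C. sim_rel \<gamma> c y}"
    using closedin_subset[OF assms] by force
  ultimately show ?thesis by simp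
qed

abbreviation "QT \<equiv> quotient_topology T (proj_class T \<gamma>)"

lemma P_cont: "continuous_map T QT (proj_class T \<gamma>)"
  using quotient_imp_continuous_map quotient_map_quotient_topology by blast

lemma P_closed: "closed_map T QT (proj_class T \<gamma>)"
  unfolding closed_map_def
proof (intro allI impI)
  fix C assume C: "closedin T C"
  have sub: "C \<subseteq> topspace T" using closedin_subset[OF C] .
  have "{x \<in> topspace T. proj_class T \<gamma> x \<in> proj_class T \<gamma> ` topspace T - proj_class T \<gamma> ` C}
     = topspace T - {y \<in> topspace T. \<exists>c\<in>C. sim_rel \<gamma> c y}"
    using sub class_eq[OF M] by blast
  moreover have "openin T (topspace T - {y \<in> topspace T. \<exists>c\<in>C. sim_rel \<gamma> c y})"
    using sat_closed[OF C] by blast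
  ultimately have "openin QT (topspace QT - proj_class T \<gamma> ` C)"
    unfolding openin_quotient_topology by auto
  then show "closedin QT (proj_class T \<gamma> ` C)"
    unfolding closedin_def using sub by auto
qed

lemma Q_Hausdorff: "Hausdorff_space QT"
  using normal_Hausdorff_space_closed_continuous_map_image[OF
      compact_Hausdorff_or_regular_imp_normal_space[OF CS] HS P_closed P_cont]
  using HS by simp

lemma Q_compact: "compact_space QT"
  using image_compactin[OF _ P_cont, of "topspace T"] CS unfolding compact_space_def by simp

lemma qd_cont: "upper_continuous_metric QT (qd \<gamma>)"
  unfolding upper_continuous_metric_def continuous_upper
proof
  fix u
  let ?P = "proj_class T \<gamma>"
  let ?S = "{z \<in> topspace T \<times> topspace T. \<gamma> (fst z) (snd z) \<le> u}"
  let ?PP = "\<lambda>z. (?P (fst z), ?P (snd z))"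
  have "compact_space (prod_topology T T)"
    using CS compact_space_prod_topology by blast
  then have "compactin (prod_topology T T) ?S" using closed_le closedin_compact_space by blast
  moreover have "continuous_map (prod_topology T T) (prod_topology QT QT) ?PP"
    by (intro continuous_map_pairedI continuous_map_compose[OF continuous_map_fst P_cont, unfolded o_def]
        continuous_map_compose[OF continuous_map_snd P_cont, unfolded o_def])
  ultimately have "compactin (prod_topology QT QT) (?PP ` ?S)" using image_compactin by blast
  moreover have "Hausdorff_space (prod_topology QT QT)"
    using Q_Hausdorff Hausdorff_space_prod_topology by blast
  ultimately have cl: "closedin (prod_topology QT QT) (?PP ` ?S)" using compactin_imp_closedin by blast
  have "?PP ` ?S = {w \<in> topspace (prod_topology QT QT). qd \<gamma> (fst w) (snd w) \<le> u}"
  proof (intro set_eqI iffI)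
    fix w assume "w \<in> ?PP ` ?S"
    then show "w \<in> {w \<in> topspace (prod_topology QT QT). qd \<gamma> (fst w) (snd w) \<le> u}"
      using qd_eq[OF M] by auto
  next
    fix w assume "w \<in> {w \<in> topspace (prod_topology QT QT). qd \<gamma> (fst w) (snd w) \<le> u}"
    then obtain x y where "x \<in> topspace T" "y \<in> topspace T" "w = (?P x, ?P y)" "qd \<gamma> (?P x) (?P y) \<le> u"
      by (auto simp: topspace_prod_topology)
    then show "w \<in> ?PP ` ?S" using qd_eq[OF M] by (auto intro!: image_eqI[of _ _ "(x,y)"])
  qed
  have "openin (prod_topology QT QT) (topspace (prod_topology QT QT) - (?PP ` ?S))"
    using openin_diff[OF openin_topspace cl] .
  moreover have "topspace (prod_topology QT QT) - (?PP ` ?S) =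
     {w \<in> topspace (prod_topology QT QT). u < (\<lambda>(A, B). qd \<gamma> A B) w}"
    using \<open>?PP ` ?S = _\<close> by (auto simp: not_le)
  ultimately show "openin (prod_topology QT QT) {w \<in> topspace (prod_topology QT QT). u < (\<lambda>(A, B). qd \<gamma> A B) w}"
    by simp
qed

end


lemma part1:
  assumes "in_Quot T d (S, e, f)"
  shows "in_Subm T d (kernel_metric (S, e, f))"
proof -
  have mor: "metCH_mor T d S e f" using assms unfolding in_Quot_def by simp
  then have sepS: "metCH_sep S e" and cf: "continuous_map T S f"
    and ne: "\<forall>x\<in>topspace T. \<forall>y\<in>topspace T. e (f x) (f y) \<le> d x y"
    unfolding metCH_mor_def by auto
  have fX: "\<And>x. x \<in> topspace T \<Longrightarrow> f x \<in> topspace S"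
    using cf continuous_map_image_subset_topspace by blast
  have "is_metric (topspace T) (\<lambda>x y. e (f x) (f y))"
    using sepS fX unfolding metCH_sep_def is_metric_def by auto
  moreover have "upper_continuous_metric T (\<lambda>x y. e (f x) (f y))"
  proof -
    have c1: "continuous_map (prod_topology S S) upper_topology (\<lambda>(x, y). e x y)"
      using sepS unfolding metCH_sep_def upper_continuous_metric_def by simp
    have c2: "continuous_map (prod_topology T T) (prod_topology S S) (\<lambda>z. (f (fst z), f (snd z)))"
      by (intro continuous_map_pairedI continuous_map_compose[OF continuous_map_fst cf, unfolded o_def]
        continuous_map_compose[OF continuous_map_snd cf, unfolded o_def])
    have "continuous_map (prod_topology T T) upper_topology ((\<lambda>(x, y). e x y) \<circ> (\<lambda>z. (f (fst z), f (snd z))))"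
      using continuous_map_compose[OF c2 c1] .
    then show ?thesis unfolding upper_continuous_metric_def by (simp add: o_def case_prod_unfold)
  qed
  ultimately show ?thesis
    unfolding in_Subm_def kernel_metric_def using ne by simp
qed

lemma part2:
  assumes X: "metCH_sep T d" and G: "in_Subm T d \<gamma>"
  shows "in_Quot T d (p_quot T \<gamma>)"
proof -
  have M: "is_metric (topspace T) \<gamma>" and UC: "upper_continuous_metric T \<gamma>"
    and le: "\<forall>x\<in>topspace T. \<forall>y\<in>topspace T. \<gamma> x y \<le> d x y"
    using G unfolding in_Subm_def by auto
  have CS: "compact_space T" and HS: "Hausdorff_space T" using X unfolding metCH_sep_def by auto
  let ?P = "proj_class T \<gamma>"
  let ?Q = "quotient_topology T ?P"
  have "is_metric (topspace ?Q) (qd \<gamma>)"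
    unfolding is_metric_def topspace_quotient_topology
    using qd_eq[OF M] M unfolding is_metric_def by auto
  moreover have "separated_metric (topspace ?Q) (qd \<gamma>)"
    unfolding separated_metric_def topspace_quotient_topology
    using qd_eq[OF M] class_eq[OF M] unfolding sim_rel_def by auto
  ultimately have "metCH_sep ?Q (qd \<gamma>)"
    unfolding metCH_sep_def
    using Q_Hausdorff[OF M UC CS HS] Q_compact[OF M UC CS HS] qd_cont[OF M UC CS HS] by auto
  then have "metCH_mor T d ?Q (qd \<gamma>) ?P"
    unfolding metCH_mor_def using X P_cont[OF M UC CS HS] qd_eq[OF M] le by auto
  then show ?thesis unfolding in_Quot_def p_quot_eq by simp
qed

lemma part6:
  assumes "is_metric (topspace T) \<gamma>" "x \<in> topspace T" "y \<in> topspace T"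
  shows "kernel_metric (p_quot T \<gamma>) x y = \<gamma> x y"
  unfolding kernel_metric_def p_quot_eq using qd_eq[OF assms] by simp


lemma part5:
  assumes X: "metCH_sep T d" and Q: "in_Quot T d (S, e, f)" and G: "in_Subm T d \<gamma>"
  shows "metric_le T (kernel_metric (S, e, f)) \<gamma> \<longleftrightarrow> quot_le T (p_quot T \<gamma>) (S, e, f)"
proof -
  have M: "is_metric (topspace T) \<gamma>" using G unfolding in_Subm_def by auto
  have mor: "metCH_mor T d S e f" using Q unfolding in_Quot_def by simp
  then have sepS: "metCH_sep S e" and cf: "continuous_map T S f"
    unfolding metCH_mor_def by auto
  have fX: "\<And>x. x \<in> topspace T \<Longrightarrow> f x \<in> topspace S"
    using cf continuous_map_image_subset_topspace by blast
  let ?P = "proj_class T \<gamma>"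
  let ?Q = "quotient_topology T ?P"
  have PQ: "metCH_mor T d ?Q (qd \<gamma>) ?P"
    using part2[OF X G] unfolding in_Quot_def p_quot_eq by simp
  then have sepQ: "metCH_sep ?Q (qd \<gamma>)" unfolding metCH_mor_def by simp
  show ?thesis
  proof
    assume le: "metric_le T (kernel_metric (S, e, f)) \<gamma>"
    define h where "h = (\<lambda>A. f (SOME a. a \<in> A))"
    have hP: "h (?P x) = f x" if x: "x \<in> topspace T" for x
    proof -
      let ?a = "SOME a. a \<in> ?P x"
      have a: "?a \<in> topspace T" "sim_rel \<gamma> x ?a" using rep_class[OF M x] by auto
      then have "e (f x) (f ?a) \<le> 0" "e (f ?a) (f x) \<le> 0"
        using le x unfolding metric_le_def kernel_metric_def sim_rel_def by (metis case_prod_conv)+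
      then show ?thesis using sepS fX[OF x] fX[OF a(1)]
        unfolding h_def metCH_sep_def separated_metric_def by auto
    qed
    have ch: "continuous_map ?Q S h"
    proof (rule continuous_compose_quotient_map[OF quotient_map_quotient_topology])
      show "continuous_map T S (h \<circ> ?P)"
        using continuous_map_eq[OF cf] hP by (metis comp_apply)
    qed
    have "metCH_mor ?Q (qd \<gamma>) S e h"
      unfolding metCH_mor_def
    proof (intro conjI ballI)
      fix A B assume "A \<in> topspace ?Q" "B \<in> topspace ?Q"
      then obtain x y where xy: "x \<in> topspace T" "y \<in> topspace T" "A = ?P x" "B = ?P y" by auto
      show "e (h A) (h B) \<le> qd \<gamma> A B"
        using le xy hP qd_eq[OF M] unfolding metric_le_def kernel_metric_def by auto
    qed (use sepQ sepS ch in auto)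
    then show "quot_le T (p_quot T \<gamma>) (S, e, f)"
      unfolding quot_le_def p_quot_eq using hP by auto
  next
    assume "quot_le T (p_quot T \<gamma>) (S, e, f)"
    then obtain h where h: "metCH_mor ?Q (qd \<gamma>) S e h" "\<forall>x\<in>topspace T. h (?P x) = f x"
      unfolding quot_le_def p_quot_eq by auto
    show "metric_le T (kernel_metric (S, e, f)) \<gamma>"
      unfolding metric_le_def kernel_metric_def
    proof (intro ballI)
      fix x y assume xy: "x \<in> topspace T" "y \<in> topspace T"
      have "e (h (?P x)) (h (?P y)) \<le> qd \<gamma> (?P x) (?P y)"
        using h(1) xy unfolding metCH_mor_def by auto
      then show "(case (S, e, f) of (S, e, f) \<Rightarrow> \<lambda>x y. e (f x) (f y)) x y \<le> \<gamma> x y"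
        using h(2) xy qd_eq[OF M] by auto
    qed
  qed
qed

lemma part3:
  assumes Q: "in_Quot T d (S, e, f)" and R: "in_Quot T d (S', e', g)"
    and le: "quot_le T (S, e, f) (S', e', g)"
  shows "metric_le T (kernel_metric (S', e', g)) (kernel_metric (S, e, f))"
proof -
  have cf: "continuous_map T S f" using Q unfolding in_Quot_def metCH_mor_def by auto
  obtain h where h: "metCH_mor S e S' e' h" "\<forall>x\<in>topspace T. h (f x) = g x"
    using le unfolding quot_le_def by auto
  show ?thesis unfolding metric_le_def kernel_metric_def
  proof (intro ballI)
    fix x y assume xy: "x \<in> topspace T" "y \<in> topspace T"
    then have "f x \<in> topspace S" "f y \<in> topspace S"
      using cf continuous_map_image_subset_topspace by blast+
    then have "e' (h (f x)) (h (f y)) \<le> e (f x) (f y)" using h(1) unfolding metCH_mor_def by auto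
    then show "(case (S', e', g) of (S, e, f) \<Rightarrow> \<lambda>x y. e (f x) (f y)) x y
      \<le> (case (S, e, f) of (S, e, f) \<Rightarrow> \<lambda>x y. e (f x) (f y)) x y"
      using h(2) xy by auto
  qed
qed

lemma quot_le_trans:
  assumes Q: "in_Quot T d (S, e, f)"
    and le1: "quot_le T (S, e, f) (S', e', g)" and le2: "quot_le T (S', e', g) (S'', e'', k)"
  shows "quot_le T (S, e, f) (S'', e'', k)"
proof -
  have cf: "continuous_map T S f" using Q unfolding in_Quot_def metCH_mor_def by auto
  obtain h1 where h1: "metCH_mor S e S' e' h1" "\<forall>x\<in>topspace T. h1 (f x) = g x"
    using le1 unfolding quot_le_def by auto
  obtain h2 where h2: "metCH_mor S' e' S'' e'' h2" "\<forall>x\<in>topspace T. h2 (g x) = k x"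
    using le2 unfolding quot_le_def by auto
  have c1: "continuous_map S S' h1" using h1(1) unfolding metCH_mor_def by auto
  have "metCH_mor S e S'' e'' (h2 \<circ> h1)"
    unfolding metCH_mor_def
  proof (intro conjI ballI)
    fix a b assume ab: "a \<in> topspace S" "b \<in> topspace S"
    then have "h1 a \<in> topspace S'" "h1 b \<in> topspace S'"
      using c1 continuous_map_image_subset_topspace by blast+
    then have "e'' (h2 (h1 a)) (h2 (h1 b)) \<le> e' (h1 a) (h1 b)" using h2(1) unfolding metCH_mor_def by auto
    also have "\<dots> \<le> e a b" using h1(1) ab unfolding metCH_mor_def by auto
    finally show "e'' ((h2 \<circ> h1) a) ((h2 \<circ> h1) b) \<le> e a b" by simp
  qed (use h1(1) h2(1) continuous_map_compose in \<open>auto simp: metCH_mor_def\<close>)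
  then show ?thesis unfolding quot_le_def using h1(2) h2(2) by auto
qed

lemma part7b:
  assumes X: "metCH_sep T d" and Q: "in_Quot T d (S, e, f)"
  shows "quot_le T (S, e, f) (p_quot T (kernel_metric (S, e, f)))"
proof -
  have mor: "metCH_mor T d S e f" and surj: "f ` topspace T = topspace S"
    using Q unfolding in_Quot_def by auto
  then have sepS: "metCH_sep S e" and cf: "continuous_map T S f"
    unfolding metCH_mor_def by auto
  have CS: "compact_space T" using X unfolding metCH_sep_def by auto
  have HSS: "Hausdorff_space S" using sepS unfolding metCH_sep_def by auto
  have eS: "is_metric (topspace S) e" using sepS unfolding metCH_sep_def by auto
  let ?k = "kernel_metric (S, e, f)"
  have K: "in_Subm T d ?k" using part1[OF Q] .
  then have M: "is_metric (topspace T) ?k" unfolding in_Subm_def by auto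
  have kv: "?k x y = e (f x) (f y)" for x y unfolding kernel_metric_def by simp
  let ?P = "proj_class T ?k"
  let ?Q = "quotient_topology T ?P"
  have PQ: "metCH_mor T d ?Q (qd ?k) ?P"
    using part2[OF X K] unfolding in_Quot_def p_quot_eq by simp
  then have sepQ: "metCH_sep ?Q (qd ?k)" and cP: "continuous_map T ?Q ?P" unfolding metCH_mor_def by auto
  define h where "h = (\<lambda>s. ?P (SOME x. x \<in> topspace T \<and> f x = s))"
  have hf: "h (f x) = ?P x" if x: "x \<in> topspace T" for x
  proof -
    let ?a = "SOME a. a \<in> topspace T \<and> f a = f x"
    have a: "?a \<in> topspace T" "f ?a = f x" using someI[of "\<lambda>a. a \<in> topspace T \<and> f a = f x" x] x by auto
    have "f x \<in> topspace S" using cf x continuous_map_image_subset_topspace by blast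
    then have "e (f x) (f x) = 0" using eS unfolding is_metric_def by auto
    then have "sim_rel ?k x ?a" unfolding sim_rel_def kv using a by simp
    then show ?thesis unfolding h_def using class_eq[OF M x a(1)] by simp
  qed
  have qm: "quotient_map T S f" using continuous_imp_quotient_map[OF cf CS HSS surj] .
  have ch: "continuous_map S ?Q h"
  proof (rule continuous_compose_quotient_map[OF qm])
    show "continuous_map T ?Q (h \<circ> f)"
      using continuous_map_eq[OF cP] hf by (metis comp_apply)
  qed
  have "metCH_mor S e ?Q (qd ?k) h"
    unfolding metCH_mor_def
  proof (intro conjI ballI)
    fix s t assume "s \<in> topspace S" "t \<in> topspace S"
    then obtain x y where xy: "x \<in> topspace T" "y \<in> topspace T" "s = f x" "t = f y"
      using surj by blast
    show "qd ?k (h s) (h t) \<le> e s t"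
      using xy hf qd_eq[OF M xy(1,2)] kv by simp
  qed (use sepQ sepS ch in auto)
  then show ?thesis unfolding quot_le_def p_quot_eq using hf by auto
qed

theorem theorem3p8:
  fixes T :: "'a topology" and d :: "'a \<Rightarrow> 'a \<Rightarrow> ennreal"
  assumes X: "metCH_sep T d"
  shows
    \<comment> \<open>the two assignments are well defined\<close>
    "(\<forall>q :: 'b topology \<times> ('b \<Rightarrow> 'b \<Rightarrow> ennreal) \<times> ('a \<Rightarrow> 'b).
        in_Quot T d q \<longrightarrow> in_Subm T d (kernel_metric q))
   \<and> (\<forall>\<gamma>. in_Subm T d \<gamma> \<longrightarrow> in_Quot T d (p_quot T \<gamma>))
    \<comment> \<open>both are order-reversing\<close>
   \<and> (\<forall>(q :: 'b topology \<times> ('b \<Rightarrow> 'b \<Rightarrow> ennreal) \<times> ('a \<Rightarrow> 'b))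
        (r :: 'c topology \<times> ('c \<Rightarrow> 'c \<Rightarrow> ennreal) \<times> ('a \<Rightarrow> 'c)).
        in_Quot T d q \<longrightarrow> in_Quot T d r \<longrightarrow> quot_le T q r \<longrightarrow>
        metric_le T (kernel_metric r) (kernel_metric q))
   \<and> (\<forall>\<gamma> \<delta>. in_Subm T d \<gamma> \<longrightarrow> in_Subm T d \<delta> \<longrightarrow> metric_le T \<gamma> \<delta> \<longrightarrow>
        quot_le T (p_quot T \<delta>) (p_quot T \<gamma>))
    \<comment> \<open>the Galois-type correspondence\<close>
   \<and> (\<forall>(q :: 'b topology \<times> ('b \<Rightarrow> 'b \<Rightarrow> ennreal) \<times> ('a \<Rightarrow> 'b)) \<gamma>.
        in_Quot T d q \<longrightarrow> in_Subm T d \<gamma> \<longrightarrow>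
        (metric_le T (kernel_metric q) \<gamma> \<longleftrightarrow> quot_le T (p_quot T \<gamma>) q))
    \<comment> \<open>kappa of p_gamma is gamma\<close>
   \<and> (\<forall>\<gamma>. in_Subm T d \<gamma> \<longrightarrow>
        (\<forall>x\<in>topspace T. \<forall>y\<in>topspace T. kernel_metric (p_quot T \<gamma>) x y = \<gamma> x y))
    \<comment> \<open>p of kappa_f is isomorphic to f\<close>
   \<and> (\<forall>q :: 'b topology \<times> ('b \<Rightarrow> 'b \<Rightarrow> ennreal) \<times> ('a \<Rightarrow> 'b).
        in_Quot T d q \<longrightarrow>
        quot_le T (p_quot T (kernel_metric q)) q \<and> quot_le T q (p_quot T (kernel_metric q)))
    \<comment> \<open>consequently: dual isomorphism of the quotient-object poset with Subm(X)\<close>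
   \<and> (\<forall>(q :: 'b topology \<times> ('b \<Rightarrow> 'b \<Rightarrow> ennreal) \<times> ('a \<Rightarrow> 'b))
        (r :: 'c topology \<times> ('c \<Rightarrow> 'c \<Rightarrow> ennreal) \<times> ('a \<Rightarrow> 'c)).
        in_Quot T d q \<longrightarrow> in_Quot T d r \<longrightarrow>
        (quot_le T q r \<longleftrightarrow> metric_le T (kernel_metric r) (kernel_metric q)))"
proof (intro conjI allI impI)
  have CS: "compact_space T" and HS: "Hausdorff_space T" using X unfolding metCH_sep_def by auto
  show "in_Subm T d (kernel_metric q)" if "in_Quot T d q" for q :: "'b topology \<times> ('b \<Rightarrow> 'b \<Rightarrow> ennreal) \<times> ('a \<Rightarrow> 'b)"
  proof -
    obtain S e f where q: "q = (S, e, f)" by (cases q)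
    show ?thesis using part1[OF that[unfolded q]] q by simp
  qed
  show "in_Quot T d (p_quot T \<gamma>)" if "in_Subm T d \<gamma>" for \<gamma>
    using part2[OF X that] .
  show "metric_le T (kernel_metric r) (kernel_metric q)"
    if "in_Quot T d q" "in_Quot T d r" "quot_le T q r"
    for q :: "'b topology \<times> ('b \<Rightarrow> 'b \<Rightarrow> ennreal) \<times> ('a \<Rightarrow> 'b)"
      and r :: "'c topology \<times> ('c \<Rightarrow> 'c \<Rightarrow> ennreal) \<times> ('a \<Rightarrow> 'c)"
  proof -
    obtain S e f where q: "q = (S, e, f)" by (cases q)
    obtain S' e' g where r: "r = (S', e', g)" by (cases r)
    show ?thesis using part3[OF that[unfolded q r]] q r by simp
  qed
  show "quot_le T (p_quot T \<delta>) (p_quot T \<gamma>)"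
    if G: "in_Subm T d \<gamma>" and D: "in_Subm T d \<delta>" and le: "metric_le T \<gamma> \<delta>" for \<gamma> \<delta>
  proof -
    have M: "is_metric (topspace T) \<gamma>" using G unfolding in_Subm_def by auto
    have "metric_le T (kernel_metric (p_quot T \<gamma>)) \<delta>"
      using le part6[OF M] unfolding metric_le_def by simp
    then show ?thesis using part5[OF X part2[OF X G, unfolded p_quot_eq] D] by (simp add: p_quot_eq)
  qed
  show "metric_le T (kernel_metric q) \<gamma> \<longleftrightarrow> quot_le T (p_quot T \<gamma>) q"
    if "in_Quot T d q" "in_Subm T d \<gamma>" for q :: "'b topology \<times> ('b \<Rightarrow> 'b \<Rightarrow> ennreal) \<times> ('a \<Rightarrow> 'b)" and \<gamma>
  proof -
    obtain S e f where q: "q = (S, e, f)" by (cases q)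
    show ?thesis using part5[OF X that[unfolded q]] q by simp
  qed
  show "\<forall>x\<in>topspace T. \<forall>y\<in>topspace T. kernel_metric (p_quot T \<gamma>) x y = \<gamma> x y"
    if "in_Subm T d \<gamma>" for \<gamma>
  proof -
    have M: "is_metric (topspace T) \<gamma>" using that unfolding in_Subm_def by auto
    show ?thesis using part6[OF M] by simp
  qed
  show "quot_le T (p_quot T (kernel_metric q)) q"
    if "in_Quot T d q" for q :: "'b topology \<times> ('b \<Rightarrow> 'b \<Rightarrow> ennreal) \<times> ('a \<Rightarrow> 'b)"
  proof -
    obtain S e f where q: "q = (S, e, f)" by (cases q)
    have "metric_le T (kernel_metric q) (kernel_metric q)" unfolding metric_le_def by simp
    then show ?thesis using part5[OF X that[unfolded q] part1[OF that[unfolded q]]] q by simp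
  qed
  show "quot_le T q (p_quot T (kernel_metric q))"
    if "in_Quot T d q" for q :: "'b topology \<times> ('b \<Rightarrow> 'b \<Rightarrow> ennreal) \<times> ('a \<Rightarrow> 'b)"
  proof -
    obtain S e f where q: "q = (S, e, f)" by (cases q)
    show ?thesis using part7b[OF X that[unfolded q]] q by simp
  qed
  show "quot_le T q r \<longleftrightarrow> metric_le T (kernel_metric r) (kernel_metric q)"
    if Q: "in_Quot T d q" and R: "in_Quot T d r"
    for q :: "'b topology \<times> ('b \<Rightarrow> 'b \<Rightarrow> ennreal) \<times> ('a \<Rightarrow> 'b)"
      and r :: "'c topology \<times> ('c \<Rightarrow> 'c \<Rightarrow> ennreal) \<times> ('a \<Rightarrow> 'c)"
  proof -
    obtain S e f where q: "q = (S, e, f)" by (cases q)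
    obtain S' e' g where r: "r = (S', e', g)" by (cases r)
    show ?thesis
    proof
      assume "quot_le T q r"
      then show "metric_le T (kernel_metric r) (kernel_metric q)"
        using part3[OF Q[unfolded q] R[unfolded r]] q r by simp
    next
      assume le: "metric_le T (kernel_metric r) (kernel_metric q)"
      have K: "in_Subm T d (kernel_metric q)" using part1[OF Q[unfolded q]] q by simp
      have 1: "quot_le T (p_quot T (kernel_metric q)) r"
        using part5[OF X R[unfolded r] K] le r by simp
      have 2: "quot_le T q (p_quot T (kernel_metric q))"
        using part7b[OF X Q[unfolded q]] q by simp
      show "quot_le T q r"
        using quot_le_trans[OF Q[unfolded q] 2[unfolded q p_quot_eq] 1[unfolded r q p_quot_eq]] q r
        by (simp add: p_quot_eq)
    qed
  qed
qed

end
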